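(* Fix $\alpha>0$, $\gamma\in(0,1)$, a constant $\bar\rho_i>0$, a finite nonempty multiset $D_{\rho_i}$ of samples $x=(s,a_i,\mathbf{a}_{-i},s')$ with $s,s'\in S$, and a distribution $p_0$ on $S$. For $\nu_i:S\to\mathbb{R}$ let $$\hat e_{\nu_i}(x)=r(s,a_i,\mathbf{a}_{-i})-\alpha\log\frac{\boldsymbol{\pi}_{-i}(\mathbf{a}_{-i}\mid s)}{\boldsymbol{\pi}^D_{-i}(\mathbf{a}_{-i}\mid s,a_i)}+\gamma\nu_i(s')-\nu_i(s),$$ $$L(\nu_i):=\bar\rho_i\,\alpha\,\hat{\mathbf{E}}_{x\in D_{\rho_i}}\Big[\exp\Big(\tfrac1\alpha\hat e_{\nu_i}(x)-1\Big)\Big]+(1-\gamma)\mathbb{E}_{s_0\sim p_0}[\nu_i(s_0)],$$ $$\tilde{\mathcal{L}}(\nu_i):=\alpha\log\Big(\bar\rho_i\,\hat{\mathbf{E}}_{x\in D_{\rho_i}}\Big[\exp\Big(\tfrac1\alpha\hat e_{\nu_i}(x)\Big)\Big]\Big)+(1-\gamma)\mathbb{E}_{s_0\sim p_0}[\nu_i(s_0)].$$ Then for any minimizer $\tilde\nu_i^*$ of $\tilde{\mathcal{L}}$ (over all functions $S\to\mathbb{R}$), there is a constant $C\in\mathbb{R}$ such that $\tilde\nu_i^*+C$ is a minimizer of $L$.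
   Context: $\hat{\mathbf{E}}_{x\in D}[f(x)]:=\frac{1}{|D|}\sum_{x\in D}f(x)$ is the empirical average over a finite multiset $D$. $r$ is a real-valued reward; $\boldsymbol{\pi}_{-i}(\mathbf{a}_{-i}\mid s)$ and $\boldsymbol{\pi}^D_{-i}(\mathbf{a}_{-i}\mid s,a_i)$ are fixed conditional probability distributions, positive on the samples of $D_{\rho_i}$. *)

theory Defs
  imports "HOL-Probability.Probability"
begin

definition emp_avg :: "'x multiset \<Rightarrow> ('x \<Rightarrow> real) \<Rightarrow> real" where
  "emp_avg D f = (\<Sum>x\<in>#D. f x) / real (size D)"

definition e_hat ::
  "real \<Rightarrow> real \<Rightarrow> ('s \<Rightarrow> 'a \<Rightarrow> 'b \<Rightarrow> real) \<Rightarrow> ('s \<Rightarrow> 'b \<Rightarrow> real)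
   \<Rightarrow> ('s \<Rightarrow> 'a \<Rightarrow> 'b \<Rightarrow> real) \<Rightarrow> ('s \<Rightarrow> real) \<Rightarrow> 's \<times> 'a \<times> 'b \<times> 's \<Rightarrow> real" where
  "e_hat \<alpha> \<gamma> r pimi piD \<nu> x = (case x of (s, ai, ami, s') \<Rightarrow>
      r s ai ami - \<alpha> * ln (pimi s ami / piD s ai ami) + \<gamma> * \<nu> s' - \<nu> s)"

definition L_obj ::
  "real \<Rightarrow> real \<Rightarrow> real \<Rightarrow> ('s \<times> 'a \<times> 'b \<times> 's) multiset \<Rightarrow> 's pmf
   \<Rightarrow> ('s \<Rightarrow> 'a \<Rightarrow> 'b \<Rightarrow> real) \<Rightarrow> ('s \<Rightarrow> 'b \<Rightarrow> real)
   \<Rightarrow> ('s \<Rightarrow> 'a \<Rightarrow> 'b \<Rightarrow> real) \<Rightarrow> ('s \<Rightarrow> real) \<Rightarrow> real" where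
  "L_obj \<alpha> \<gamma> \<rho> D p0 r pimi piD \<nu> =
     \<rho> * \<alpha> * emp_avg D (\<lambda>x. exp (e_hat \<alpha> \<gamma> r pimi piD \<nu> x / \<alpha> - 1))
     + (1 - \<gamma>) * measure_pmf.expectation p0 \<nu>"

definition Ltilde_obj ::
  "real \<Rightarrow> real \<Rightarrow> real \<Rightarrow> ('s \<times> 'a \<times> 'b \<times> 's) multiset \<Rightarrow> 's pmf
   \<Rightarrow> ('s \<Rightarrow> 'a \<Rightarrow> 'b \<Rightarrow> real) \<Rightarrow> ('s \<Rightarrow> 'b \<Rightarrow> real)
   \<Rightarrow> ('s \<Rightarrow> 'a \<Rightarrow> 'b \<Rightarrow> real) \<Rightarrow> ('s \<Rightarrow> real) \<Rightarrow> real" where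
  "Ltilde_obj \<alpha> \<gamma> \<rho> D p0 r pimi piD \<nu> =
     \<alpha> * ln (\<rho> * emp_avg D (\<lambda>x. exp (e_hat \<alpha> \<gamma> r pimi piD \<nu> x / \<alpha>)))
     + (1 - \<gamma>) * measure_pmf.expectation p0 \<nu>"

end

theory Submission
  imports Defs
begin

lemma emp_avg_mult: "emp_avg D (\<lambda>x. f x * c) = emp_avg D f * c"
  unfolding emp_avg_def by (simp add: sum_mset_distrib_right[symmetric])

lemma sum_mset_pos: "M \<noteq> {#} \<Longrightarrow> (\<And>x. x \<in># M \<Longrightarrow> f x > (0::real)) \<Longrightarrow> (\<Sum>x\<in>#M. f x) > 0"
proof (induction M)
  case empty then show ?case by simp
next
  case (add x M)
  show ?case
  proof (cases "M = {#}")
    case True then show ?thesis using add by simp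
  next
    case False
    then have "(\<Sum>x\<in>#M. f x) > 0" using add by simp
    moreover have "f x > 0" using add by simp
    ultimately show ?thesis by simp
  qed
qed

lemma emp_avg_exp_pos: "D \<noteq> {#} \<Longrightarrow> emp_avg D (\<lambda>x. exp (g x)) > 0"
  unfolding emp_avg_def
  by (intro divide_pos_pos sum_mset_pos) (auto simp: nonempty_has_size)

lemma e_hat_shift: "e_hat \<alpha> \<gamma> r pimi piD (\<lambda>s. \<nu> s + C) x = e_hat \<alpha> \<gamma> r pimi piD \<nu> x + (\<gamma> - 1) * C"
  unfolding e_hat_def by (cases x) (simp add: algebra_simps)

lemma exp_shift: assumes fin: "finite (set_pmf p0)" shows
  "measure_pmf.expectation p0 (\<lambda>s. \<nu> s + C) = measure_pmf.expectation p0 \<nu> + (C::real)"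
proof -
  have i1: "integrable (measure_pmf p0) \<nu>" using fin by (rule integrable_measure_pmf_finite)
  have i2: "integrable (measure_pmf p0) (\<lambda>s. C)" using fin by (rule integrable_measure_pmf_finite)
  have "measure_pmf.expectation p0 (\<lambda>s. C) = C"
    by (simp add: lebesgue_integral_const measure_pmf.prob_space)
  then show ?thesis using Bochner_Integration.integral_add[OF i1 i2] by simp
qed

lemma ln_le_div_e: "(y::real) > 0 \<Longrightarrow> ln y \<le> y / exp 1"
proof -
  assume y: "y > 0"
  have "ln (y / exp 1) \<le> y / exp 1 - 1" using y ln_le_minus_one[of "y / exp 1"] by simp
  then show ?thesis using y by (simp add: ln_div)
qed

theorem lemma4:
  fixes \<alpha> \<gamma> \<rho> :: real
    and D :: "('s \<times> 'a \<times> 'b \<times> 's) multiset"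
    and p0 :: "'s pmf"
    and r :: "'s \<Rightarrow> 'a \<Rightarrow> 'b \<Rightarrow> real"
    and pimi :: "'s \<Rightarrow> 'b \<Rightarrow> real"
    and piD :: "'s \<Rightarrow> 'a \<Rightarrow> 'b \<Rightarrow> real"
    and \<nu>s :: "'s \<Rightarrow> real"
  assumes "\<alpha> > 0" and "0 < \<gamma>" and "\<gamma> < 1" and "\<rho> > 0"
    and "D \<noteq> {#}"
    and "finite (set_pmf p0)"
    and "\<And>s ai ami s'. (s, ai, ami, s') \<in># D \<Longrightarrow> pimi s ami > 0 \<and> piD s ai ami > 0"
    and "\<And>\<nu>. Ltilde_obj \<alpha> \<gamma> \<rho> D p0 r pimi piD \<nu>s \<le> Ltilde_obj \<alpha> \<gamma> \<rho> D p0 r pimi piD \<nu>"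
  shows "\<exists>C::real. \<forall>\<nu>. L_obj \<alpha> \<gamma> \<rho> D p0 r pimi piD (\<lambda>s. \<nu>s s + C)
                          \<le> L_obj \<alpha> \<gamma> \<rho> D p0 r pimi piD \<nu>"
proof -
  define A where "A = (\<lambda>\<nu>. emp_avg D (\<lambda>x. exp (e_hat \<alpha> \<gamma> r pimi piD \<nu> x / \<alpha>)))"
  define E where "E = (\<lambda>\<nu>::'s \<Rightarrow> real. measure_pmf.expectation p0 \<nu>)"
  have Apos: "A \<nu> > 0" for \<nu> unfolding A_def using assms(5) by (rule emp_avg_exp_pos)
  have Lt: "Ltilde_obj \<alpha> \<gamma> \<rho> D p0 r pimi piD \<nu> = \<alpha> * ln (\<rho> * A \<nu>) + (1 - \<gamma>) * E \<nu>" for \<nu>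
    unfolding Ltilde_obj_def A_def E_def by simp
  have L: "L_obj \<alpha> \<gamma> \<rho> D p0 r pimi piD \<nu> = \<alpha> * (\<rho> * A \<nu> / exp 1) + (1 - \<gamma>) * E \<nu>" for \<nu>
  proof -
    have "(\<lambda>x. exp (e_hat \<alpha> \<gamma> r pimi piD \<nu> x / \<alpha> - 1))
        = (\<lambda>x. exp (e_hat \<alpha> \<gamma> r pimi piD \<nu> x / \<alpha>) * exp (-1))" (is "?l = ?r")
      by (simp add: exp_diff exp_minus field_simps)
    note eqq = this
    show ?thesis unfolding L_obj_def A_def E_def eqq emp_avg_mult
      by (simp add: exp_minus field_simps)
  qed
  have Ashift: "A (\<lambda>s. \<nu> s + C) = A \<nu> * exp ((\<gamma> - 1) * C / \<alpha>)" for \<nu> C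
  proof -
    have "(\<lambda>x. exp (e_hat \<alpha> \<gamma> r pimi piD (\<lambda>s. \<nu> s + C) x / \<alpha>))
        = (\<lambda>x. exp (e_hat \<alpha> \<gamma> r pimi piD \<nu> x / \<alpha>) * exp ((\<gamma> - 1) * C / \<alpha>))"
      by (simp add: e_hat_shift add_divide_distrib exp_add)
    then show ?thesis unfolding A_def by (simp add: emp_avg_mult)
  qed
  have Eshift: "E (\<lambda>s. \<nu> s + C) = E \<nu> + C" for \<nu> C
    unfolding E_def using assms(6) by (rule exp_shift)
  have Ltshift: "Ltilde_obj \<alpha> \<gamma> \<rho> D p0 r pimi piD (\<lambda>s. \<nu> s + C) = Ltilde_obj \<alpha> \<gamma> \<rho> D p0 r pimi piD \<nu>" for \<nu> C
  proof -
    have "ln (\<rho> * A (\<lambda>s. \<nu> s + C)) = ln (\<rho> * A \<nu>) + (\<gamma> - 1) * C / \<alpha>"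
      using Apos[of \<nu>] assms(4) by (simp add: Ashift ln_mult)
    then show ?thesis unfolding Lt Eshift using assms(1) by (simp add: field_simps)
  qed
  have LgeLt: "Ltilde_obj \<alpha> \<gamma> \<rho> D p0 r pimi piD \<nu> \<le> L_obj \<alpha> \<gamma> \<rho> D p0 r pimi piD \<nu>" for \<nu>
  proof -
    have "ln (\<rho> * A \<nu>) \<le> \<rho> * A \<nu> / exp 1" using Apos[of \<nu>] assms(4) by (intro ln_le_div_e) simp
    then have "\<alpha> * ln (\<rho> * A \<nu>) \<le> \<alpha> * (\<rho> * A \<nu> / exp 1)"
      using assms(1) by (intro mult_left_mono) auto
    then show ?thesis unfolding Lt L by simp
  qed
  define C where "C = \<alpha> / (1 - \<gamma>) * (ln (\<rho> * A \<nu>s) - 1)"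
  have "\<rho> * A (\<lambda>s. \<nu>s s + C) = exp 1"
  proof -
    have "(\<gamma> - 1) * C / \<alpha> = 1 - ln (\<rho> * A \<nu>s)"
      unfolding C_def using assms(1,3) by (simp add: field_simps)
    then have "\<rho> * A (\<lambda>s. \<nu>s s + C) = (\<rho> * A \<nu>s) * exp (1 - ln (\<rho> * A \<nu>s))"
      by (simp add: Ashift)
    also have "\<dots> = exp 1" using Apos[of \<nu>s] assms(4) by (simp add: exp_diff)
    finally show ?thesis .
  qed
  then have eq: "L_obj \<alpha> \<gamma> \<rho> D p0 r pimi piD (\<lambda>s. \<nu>s s + C) = Ltilde_obj \<alpha> \<gamma> \<rho> D p0 r pimi piD (\<lambda>s. \<nu>s s + C)"
    unfolding L Lt by simp
  show ?thesis
  proof (intro exI allI)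
    fix \<nu>
    have "L_obj \<alpha> \<gamma> \<rho> D p0 r pimi piD (\<lambda>s. \<nu>s s + C) = Ltilde_obj \<alpha> \<gamma> \<rho> D p0 r pimi piD \<nu>s"
      using eq Ltshift by simp
    also have "\<dots> \<le> Ltilde_obj \<alpha> \<gamma> \<rho> D p0 r pimi piD \<nu>" by (rule assms(8))
    also have "\<dots> \<le> L_obj \<alpha> \<gamma> \<rho> D p0 r pimi piD \<nu>" by (rule LgeLt)
    finally show "L_obj \<alpha> \<gamma> \<rho> D p0 r pimi piD (\<lambda>s. \<nu>s s + C) \<le> L_obj \<alpha> \<gamma> \<rho> D p0 r pimi piD \<nu>" .
  qed
qed

end
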